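(* Let $p$ be an odd prime, $\zeta_p = e^{2\pi i/p}$, and for $1 \leq i \leq p-1$ let $$\rho_i = \sqrt{2} - \frac{2\sqrt{2}}{(1+\sqrt{2})^{-2/p}\zeta_p^i + 1},$$ where $(1+\sqrt{2})^{-2/p}$ is the positive real value (these are the non-real roots of $\frac{1}{2\sqrt{2}}\left((1+\sqrt{2})(x+\sqrt{2})^p - (1-\sqrt{2})(x-\sqrt{2})^p\right)$). Then $$\prod_{i=1}^{p-1} |\operatorname{Im}(\rho_i)| \geq p\, 2^{\frac{p-3}{2}}.$$ *)

theory Defs
  imports "HOL-Analysis.Analysis" "HOL-Computational_Algebra.Primes"
begin

definition zeta :: "nat \<Rightarrow> complex" where
  "zeta p = exp (2 * complex_of_real pi * \<i> / of_nat p)"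

definition rho :: "nat \<Rightarrow> nat \<Rightarrow> complex" where
  "rho p i = complex_of_real (sqrt 2) - complex_of_real (2 * sqrt 2) /
      (complex_of_real ((1 + sqrt 2) powr (- 2 / real p)) * zeta p ^ i + 1)"

end

theory Submission
  imports Defs "HOL-Computational_Algebra.Polynomial"
begin

lemma zeta_pow: "zeta n ^ i = exp(2 * of_real pi * \<i> * of_nat i / of_nat n)"
  unfolding zeta_def by (simp add: exp_of_nat_mult[symmetric] field_simps)

lemma roots_prod:
  assumes "n \<ge> 1"
  shows "(\<Prod>i<n. x - zeta n ^ i) = x ^ n - 1"
proof -
  define Q where "Q = (\<Prod>i<n. [:- (zeta n ^ i), 1:])"
  define P :: "complex poly" where "P = monom 1 n - 1"
  define A where "A = {exp(2 * of_real pi * \<i> * of_nat j / of_nat n) | j::nat. j < n}"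
  have cardA: "card A = n" unfolding A_def by (rule card_complex_roots_unity_explicit)
  have degQ: "degree Q = n" unfolding Q_def
    by (subst degree_prod_eq_sum_degree) auto
  have lcQ: "coeff Q n = 1" using degQ lead_coeff_prod[of "\<lambda>i. [:- (zeta n ^ i), 1:]" "{..<n}"]
    unfolding Q_def by simp
  have degP: "degree P \<le> n" unfolding P_def using assms
    by (intro degree_diff_le) (auto simp: degree_monom_le)
  have lcP: "coeff P n = 1" unfolding P_def using assms by (simp add: coeff_monom)
  have "Q = P"
  proof (rule poly_eqI_degree_lead_coeff[of Q n P A])
    fix y assume "y \<in> A"
    then obtain j where j: "j < n" "y = zeta n ^ j" unfolding A_def by (auto simp: zeta_pow)
    have "poly Q y = 0" unfolding Q_def poly_prod using j by (intro prod_zero) (auto intro!: bexI[where x=j])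
    moreover have "poly P y = 0" unfolding P_def using j assms
      by (simp add: poly_monom zeta_pow complex_root_unity)
    ultimately show "poly Q y = poly P y" by simp
  qed (use cardA degQ lcQ degP lcP in auto)
  hence "poly Q x = poly P x" by simp
  thus ?thesis unfolding Q_def P_def poly_prod by (simp add: poly_monom)
qed


lemma split0: "n \<ge> 1 \<Longrightarrow> {..<n} = insert (0::nat) {1..<n}" by auto

lemma prod_one_minus:
  assumes "n \<ge> 1"
  shows "(\<Prod>i\<in>{1..<n}. 1 - zeta n ^ i) = of_nat n"
proof -
  define G where "G = (\<Prod>i\<in>{1..<n}. [:- (zeta n ^ i), 1:])"
  define H :: "complex poly" where "H = (\<Sum>k<n. monom 1 k)"
  have "poly ([:-1,1:] * G) x = poly ([:-1,1:] * H) x" for x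
  proof -
    have "poly ([:-1,1:] * G) x = (\<Prod>i<n. x - zeta n ^ i)"
      unfolding G_def poly_mult poly_prod using assms by (simp add: split0)
    also have "\<dots> = x ^ n - 1" by (rule roots_prod[OF assms])
    also have "\<dots> = poly ([:-1,1:] * H) x"
      unfolding H_def poly_mult poly_sum by (simp add: poly_monom power_diff_1_eq)
    finally show ?thesis .
  qed
  hence "poly ([:-1,1:] * G) = poly ([:-1,1:] * H)" by (rule ext)
  hence "[:-1,1:] * G = [:-1,1:] * H" by (simp only: poly_eq_poly_eq_iff)
  moreover have "[:-1,1:] \<noteq> (0::complex poly)" by simp
  ultimately have "G = H" by (metis mult_cancel_left)
  hence "poly G 1 = poly H 1" by simp
  thus ?thesis unfolding G_def H_def poly_prod poly_sum by (simp add: poly_monom)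
qed

lemma prod_one_plus:
  assumes "odd n"
  shows "(\<Prod>i<n. 1 + c * zeta n ^ i) = 1 + c ^ n"
proof (cases "c = 0")
  case True
  then show ?thesis using assms by (cases n) auto
next
  case False
  have n1: "n \<ge> 1" using assms by (cases n) auto
  have "(\<Prod>i<n. 1 + c * zeta n ^ i) = (\<Prod>i<n. (-c) * ((-1/c) - zeta n ^ i))"
    using False by (intro prod.cong) (auto simp: field_simps)
  also have "\<dots> = (-c)^n * (\<Prod>i<n. (-1/c) - zeta n ^ i)"
    by (simp only: prod.distrib prod_constant card_lessThan)
  also have "\<dots> = (-c)^n * ((-1/c)^n - 1)" by (simp add: roots_prod[OF n1])
  also have "\<dots> = ((-c) * (-1/c))^n - (-c)^n" by (simp only: power_mult_distrib right_diff_distrib mult_1_right)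
  also have "(-c) * (-1/c) = 1" using False by simp
  also have "(1::complex)^n - (-c)^n = 1 + c ^ n" using assms by (simp add: power_minus_odd)
  finally show ?thesis .
qed

lemma unit_lemma:
  assumes "cmod u = 1"
  shows "cmod (u - 1) * cmod (u + 1) = 2 * \<bar>Im u\<bar>"
proof -
  obtain a b where u: "u = Complex a b" by (cases u)
  have ab: "a^2 + b^2 = 1" using assms u by (simp add: cmod_def)
  have "cmod (u - 1) * cmod (u + 1) = sqrt (((a-1)^2 + b^2) * ((a+1)^2 + b^2))"
    using u by (simp add: cmod_def real_sqrt_mult)
  also have "((a-1)^2 + b^2) * ((a+1)^2 + b^2) = (2 * b)^2"
  proof -
    have e1: "(a-1)^2 + b^2 = 2 - 2*a" using ab by (simp add: power2_diff algebra_simps)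
    have e2: "(a+1)^2 + b^2 = 2 + 2*a" using ab by (simp add: power2_sum algebra_simps)
    have "(2 - 2*a) * (2 + 2*a) = (2*b)^2" using ab by (simp add: power2_eq_square algebra_simps)
    thus ?thesis using e1 e2 by simp
  qed
  finally show ?thesis using u by (simp add: real_sqrt_mult)
qed


lemma final_ineq:
  fixes r :: real and m :: nat
  assumes r: "r > 0" and rp: "r ^ (2*m+1) = 3 - 2 * sqrt 2" and m: "m \<ge> 1"
  shows "(sqrt 2 * r) ^ (2*m) * real (2*m+1) / ((1 + r^(2*m+1)) / (1 + r))^2
         \<ge> real (2*m+1) * 2 powr ((real (2*m+1) - 3) / 2)"
proof -
  have s2: "sqrt 2 ^ 2 = 2" by simp
  have "(sqrt 2 * r) ^ (2*m) = 2^m * r^(2*m)"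
    by (simp add: power_mult_distrib power_mult s2)
  have pw: "2 powr ((real (2*m+1) - 3) / 2) = 2^m / 2"
  proof -
    have e: "(real (2*m+1) - 3) / 2 = real m - 1" by simp
    have "2 powr ((real (2*m+1) - 3) / 2) = 2 powr real m / 2 powr 1"
      unfolding e by (rule powr_diff)
    thus ?thesis by (simp add: powr_realpow)
  qed
  have sq: "(1 + (3 - 2 * sqrt 2))^2 = 8 * (3 - 2 * sqrt 2)"
    by (simp add: power2_eq_square algebra_simps)
  define q where "q = r^(2*m)"
  have q: "q > 0" using r by (simp add: q_def)
  have rq: "r^(2*m+1) = q * r" by (simp add: q_def)
  have amgm0: "(1+r)^2 - 4*r = (1-r)^2" by (simp add: power2_eq_square algebra_simps)
  have amgm: "(1 + r)^2 \<ge> 4 * r" using amgm0 zero_le_power2[of "1-r"] by linarith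
  have key: "q * (1+r)^2 / (8 * (q * r)) \<ge> 1/2"
    using amgm q r by (simp add: field_simps)
  have "(sqrt 2 * r) ^ (2*m) * real (2*m+1) / ((1 + r^(2*m+1)) / (1 + r))^2
      = 2^m * q * real (2*m+1) / ((1 + r^(2*m+1)) / (1 + r))^2"
    unfolding \<open>(sqrt 2 * r) ^ (2*m) = 2^m * r^(2*m)\<close> q_def by simp
  also have "\<dots> = real (2*m+1) * 2^m * (q * (1+r)^2 / (1 + r^(2*m+1))^2)"
    using r by (simp add: power_divide)
  also have "(1 + r^(2*m+1))^2 = 8 * (q * r)" unfolding rp sq rq[symmetric] by (rule refl)
  finally have eq: "(sqrt 2 * r) ^ (2*m) * real (2*m+1) / ((1 + r^(2*m+1)) / (1 + r))^2
      = real (2*m+1) * 2^m * (q * (1+r)^2 / (8 * (q * r)))" .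
  have "real (2*m+1) * 2^m * (1/2) \<le> real (2*m+1) * 2^m * (q * (1+r)^2 / (8 * (q * r)))"
    by (intro mult_left_mono key) auto
  thus ?thesis unfolding eq pw by simp
qed


theorem theorem6p1:
  fixes p :: nat
  assumes "prime p" and "odd p"
  shows "(\<Prod>i=1..p-1. \<bar>Im (rho p i)\<bar>) \<ge> real p * 2 powr ((real p - 3) / 2)"
proof -
  have p2: "p \<ge> 2" using assms(1) prime_ge_2_nat by blast
  obtain m where pm: "p = 2*m+1" using assms(2) oddE by blast
  have m1: "m \<ge> 1" using p2 pm by simp
  have p1: "p \<ge> 1" using p2 by simp
  define r where "r = (1 + sqrt 2) powr (- 2 / real p)"
  define c where "c = complex_of_real r"
  define z where "z = zeta p"
  have s0: "1 + sqrt 2 > 0" by (smt (verit) real_sqrt_ge_zero)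
  have r0: "r > 0" unfolding r_def using s0 by simp
  have rp: "r ^ p = 3 - 2 * sqrt 2"
  proof -
    have "r ^ p = r powr real p" using r0 by (simp add: powr_realpow)
    also have "\<dots> = (1 + sqrt 2) powr (- 2)" unfolding r_def powr_powr using p2 by simp
    also have "\<dots> = 1 / (1 + sqrt 2)^2" using s0 by (subst powr_minus) (simp add: powr_numeral divide_inverse)
    also have "(1 + sqrt 2)^2 = 3 + 2 * sqrt 2" by (simp add: power2_eq_square algebra_simps)
    also have "1 / (3 + 2 * sqrt 2) = 3 - 2 * sqrt 2"
    proof -
      have "(3 + 2 * sqrt 2) * (3 - 2 * sqrt 2) = 1" by (simp add: algebra_simps)
      moreover have "3 + 2 * sqrt 2 \<noteq> 0" by (smt (verit) real_sqrt_ge_zero)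
      ultimately show ?thesis by (simp add: field_simps)
    qed
    finally show ?thesis .
  qed
  have nz: "cmod z = 1" unfolding z_def zeta_def by (simp add: norm_exp_eq_Re)
  have each: "\<bar>Im (rho p i)\<bar> = sqrt 2 * r * (cmod (z^i - 1) * cmod (z^i + 1)) / (cmod (1 + c * z^i))^2" for i
  proof -
    have "Im (rho p i) = 2 * sqrt 2 * Im (c * z^i) / (cmod (1 + c * z^i))^2"
      unfolding rho_def c_def z_def r_def
      by (simp add: Im_divide cmod_power2 add.commute)
    also have "Im (c * z^i) = r * Im (z^i)" unfolding c_def by simp
    finally have "\<bar>Im (rho p i)\<bar> = sqrt 2 * r * (2 * \<bar>Im (z^i)\<bar>) / (cmod (1 + c * z^i))^2"
      using r0 by (simp add: abs_mult abs_divide mult_ac)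
    also have "2 * \<bar>Im (z^i)\<bar> = cmod (z^i - 1) * cmod (z^i + 1)"
      by (rule unit_lemma[symmetric]) (simp add: norm_power nz)
    finally show ?thesis .
  qed
  have A1: "(\<Prod>i\<in>{1..<p}. cmod (z^i - 1)) = real p"
  proof -
    have "(\<Prod>i\<in>{1..<p}. cmod (z^i - 1)) = cmod (\<Prod>i\<in>{1..<p}. 1 - z^i)"
      by (simp add: prod_norm[symmetric] norm_minus_commute)
    also have "\<dots> = real p" unfolding z_def prod_one_minus[OF p1] by simp
    finally show ?thesis .
  qed
  have B: "(1 + c) * (\<Prod>i\<in>{1..<p}. 1 + c * z^i) = 1 + c^p" for c
    using prod_one_plus[OF assms(2), of c] unfolding z_def split0[OF p1] by simp
  have A2: "(\<Prod>i\<in>{1..<p}. cmod (z^i + 1)) = 1"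
  proof -
    have "(\<Prod>i\<in>{1..<p}. 1 + 1 * z^i) = 1" using B[of 1] by simp
    hence "cmod (\<Prod>i\<in>{1..<p}. 1 + z^i) = 1" by simp
    thus ?thesis by (simp add: prod_norm[symmetric] add.commute)
  qed
  have A3: "(\<Prod>i\<in>{1..<p}. cmod (1 + c * z^i)) = (1 + r^p) / (1 + r)"
  proof -
    have "(1 + r) * cmod (\<Prod>i\<in>{1..<p}. 1 + c * z^i) = cmod ((1 + c) * (\<Prod>i\<in>{1..<p}. 1 + c * z^i))"
      using r0 unfolding norm_mult c_def
      by (metis abs_of_pos add_pos_pos norm_of_real of_real_1 of_real_add zero_less_one)
    also have "\<dots> = 1 + r^p" unfolding B c_def using r0
      by (metis abs_of_pos add_pos_pos norm_of_real of_real_1 of_real_add of_real_power zero_less_one zero_less_power)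
    finally show ?thesis using r0 by (simp add: prod_norm field_simps)
  qed
  have "(\<Prod>i=1..p-1. \<bar>Im (rho p i)\<bar>) = (\<Prod>i\<in>{1..<p}. \<bar>Im (rho p i)\<bar>)"
    using p1 by (intro prod.cong) auto
  also have "\<dots> = (\<Prod>i\<in>{1..<p}. (sqrt 2 * r) * (cmod (z^i - 1) * cmod (z^i + 1)) / (cmod (1 + c * z^i))^2)"
    unfolding each by (simp add: mult_ac)
  also have "\<dots> = (sqrt 2 * r) ^ (p - 1) * ((\<Prod>i\<in>{1..<p}. cmod (z^i - 1)) * (\<Prod>i\<in>{1..<p}. cmod (z^i + 1)))
      / (\<Prod>i\<in>{1..<p}. cmod (1 + c * z^i))^2"
    by (simp add: prod.distrib prod_dividef prod_power_distrib)
  also have "\<dots> = (sqrt 2 * r) ^ (2*m) * real (2*m+1) / ((1 + r^(2*m+1)) / (1 + r))^2"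
    unfolding A1 A2 A3 by (simp add: pm)
  finally have eq: "(\<Prod>i=1..p-1. \<bar>Im (rho p i)\<bar>) = (sqrt 2 * r) ^ (2*m) * real (2*m+1) / ((1 + r^(2*m+1)) / (1 + r))^2" .
  show ?thesis unfolding eq using final_ineq[OF r0 rp[unfolded pm] m1] unfolding pm .
qed

end
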